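(* Let $K$ be an algebraically closed field of characteristic zero, $\mathcal{K}=K(t)$, $\alpha \in \mathcal{K}$, and $M \ge 0$. Let \[\phi_1(z) = -\frac{t(z+1)}{z-(t-1)}.\] Then $\alpha$ fails to realize portrait $(M,1)$ for $f_2(z) = z^2+t$ if and only if $M = 1$ and $\alpha \in \mathcal{O}_{\phi_1}(0)\cup\mathcal{O}_{\phi_1}(\infty)$. Moreover, for each $k\ge0$, $h(\phi_1^k(0)) = h(\phi_1^k(\infty)) = k$.
   Context: $\phi_1$ is viewed as a self-map of $\mathbb{P}^1(\mathcal{K})$ and $\mathcal{O}_{\phi_1}(x) = \{\phi_1^k(x): k\ge0\}$. The height $h$ of an element of $K(t)$ is its degree as a rational function in $t$, with $h(\infty)=0$. For $c \in K$, $f_{2,c}(z) = z^2+c$. A point $x$ has preperiodic portrait $(M,N)$ for $\phi$ if $M\ge0$ is minimal with $\phi^M(x)$ periodic and $\phi^M(x)$ has exact period $N$. We say $\alpha$ realizes portrait $(M,N)$ for $f_2$ if there exists $c \in K$ such that $\alpha(c)$ (reduction modulo the place $t=c$) has portrait $(M,N)$ for $f_{2,c}$. *)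

theory Defs
  imports "HOL-Computational_Algebra.Computational_Algebra"
begin

text \<open>The rational function field K(t) is modelled as 'a poly fract; points of
  P^1 are modelled by the option type, None being the point at infinity.\<close>

type_synonym 'a ratfun = "'a poly fract"

definition tvar :: "'a::field ratfun" where
  "tvar = Fract [:0, 1:] 1"

text \<open>Numerator and denominator in lowest terms (coprime, denominator monic);
  this pair exists and is unique.\<close>
definition rnumden :: "'a::field ratfun \<Rightarrow> 'a poly \<times> 'a poly" where
  "rnumden x = (SOME (p, q). x = Fract p q \<and> lead_coeff q = 1 \<and> coprime p q)"
definition rnum :: "'a::field ratfun \<Rightarrow> 'a poly" where
  "rnum x = fst (rnumden x)"
definition rden :: "'a::field ratfun \<Rightarrow> 'a poly" where
  "rden x = snd (rnumden x)"

definition height :: "'a::field ratfun option \<Rightarrow> nat" where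
  "height x = (case x of None \<Rightarrow> 0
      | Some r \<Rightarrow> max (degree (rnum r)) (degree (rden r)))"

definition reduce_at :: "'a::field ratfun \<Rightarrow> 'a \<Rightarrow> 'a option" where
  "reduce_at x c = (if poly (rden x) c = 0 then None
      else Some (poly (rnum x) c / poly (rden x) c))"

definition phi1 :: "'a::field ratfun option \<Rightarrow> 'a ratfun option" where
  "phi1 x = (case x of None \<Rightarrow> Some (- tvar)
      | Some z \<Rightarrow> (if z = tvar - 1 then None
                  else Some (- tvar * (z + 1) / (z - (tvar - 1)))))"

definition orbit :: "('b \<Rightarrow> 'b) \<Rightarrow> 'b \<Rightarrow> 'b set" where
  "orbit f x = {(f ^^ k) x | k. True}"

definition f2 :: "'a::field \<Rightarrow> 'a option \<Rightarrow> 'a option" where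
  "f2 c x = map_option (\<lambda>z. z ^ 2 + c) x"

definition is_periodic :: "('b \<Rightarrow> 'b) \<Rightarrow> 'b \<Rightarrow> bool" where
  "is_periodic f y \<longleftrightarrow> (\<exists>n>0. (f ^^ n) y = y)"

definition exact_period :: "('b \<Rightarrow> 'b) \<Rightarrow> 'b \<Rightarrow> nat \<Rightarrow> bool" where
  "exact_period f y N \<longleftrightarrow> N > 0 \<and> (f ^^ N) y = y \<and> (\<forall>n. 0 < n \<and> n < N \<longrightarrow> (f ^^ n) y \<noteq> y)"

definition has_portrait :: "('b \<Rightarrow> 'b) \<Rightarrow> 'b \<Rightarrow> nat \<Rightarrow> nat \<Rightarrow> bool" where
  "has_portrait f x M N \<longleftrightarrow>
     is_periodic f ((f ^^ M) x) \<and> (\<forall>m<M. \<not> is_periodic f ((f ^^ m) x)) \<and>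
     exact_period f ((f ^^ M) x) N"

definition realizes :: "'a::field ratfun \<Rightarrow> nat \<Rightarrow> nat \<Rightarrow> bool" where
  "realizes \<alpha> M N \<longleftrightarrow> (\<exists>c. has_portrait (f2 c) (reduce_at \<alpha> c) M N)"

end

theory Submission
  imports Defs
begin


lemma exists_coprime_rep:
  fixes x :: "'a::field ratfun"
  shows "\<exists>a b. b \<noteq> 0 \<and> x = Fract a b \<and> coprime a b"
proof -
  let ?Q = "\<lambda>n. \<exists>a b. b \<noteq> 0 \<and> x = Fract a b \<and> degree b = n"
  obtain a0 b0 where "x = Fract a0 b0" "b0 \<noteq> 0" by (cases x)
  hence "\<exists>n. ?Q n" by blast
  then obtain n where Qn: "?Q n" and min: "\<And>m. m < n \<Longrightarrow> \<not> ?Q m"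
    using exists_least_iff[of ?Q] by blast
  then obtain a b where ab: "b \<noteq> 0" "x = Fract a b" "degree b = n" by blast
  have "coprime a b"
  proof (rule coprimeI)
    fix d assume da: "d dvd a" and db: "d dvd b"
    show "is_unit d"
    proof (rule ccontr)
      assume nu: "\<not> is_unit d"
      from db ab(1) have d0: "d \<noteq> 0" by auto
      hence dpos: "degree d > 0" using nu is_unit_iff_degree by blast
      obtain a' where a': "a = d * a'" using da by (auto elim: dvdE)
      obtain b' where b': "b = d * b'" using db by (auto elim: dvdE)
      have b'0: "b' \<noteq> 0" using b' ab(1) by auto
      have "x = Fract a' b'" using ab(2) a' b' d0 by (simp add: mult_fract_cancel)
      moreover have "degree b = degree d + degree b'" using b' d0 b'0 by (simp add: degree_mult_eq)
      ultimately have "?Q (degree b')" using b'0 by blast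
      moreover have "degree b' < n" using ab(3) dpos \<open>degree b = degree d + degree b'\<close> by simp
      ultimately show False using min by blast
    qed
  qed
  thus ?thesis using ab by blast
qed

lemma rnumden_ok:
  fixes x :: "'a::field ratfun"
  shows "x = Fract (rnum x) (rden x) \<and> lead_coeff (rden x) = 1 \<and> coprime (rnum x) (rden x)"
proof -
  let ?P = "\<lambda>(p, q). x = Fract p q \<and> lead_coeff q = 1 \<and> coprime p q"
  obtain a b where ab: "b \<noteq> 0" "x = Fract a b" "coprime a b" using exists_coprime_rep by blast
  define u where "u = inverse (lead_coeff b)"
  have u0: "u \<noteq> 0" using ab(1) by (simp add: u_def)
  have "?P (smult u a, smult u b)"
  proof -
    have "lead_coeff (smult u b) = 1" using ab(1) by (simp add: u_def)
    moreover have "x = Fract (smult u a) (smult u b)"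
      using ab u0 mult_fract_cancel[of "[:u:]" a b] by simp
    moreover have "coprime (smult u a) (smult u b)"
      using ab(3) u0 by (simp add: coprime_def) (metis dvd_smult_cancel)
    ultimately show ?thesis by simp
  qed
  hence "?P (rnumden x)" unfolding rnumden_def by (rule someI)
  thus ?thesis unfolding rnum_def rden_def by (auto simp: case_prod_beta)
qed

lemma coprime_iff_no_common_root:
  fixes p q :: "'a::alg_closed_field poly"
  shows "coprime p q \<longleftrightarrow> (\<forall>c. poly p c \<noteq> 0 \<or> poly q c \<noteq> 0)"
proof
  assume cp: "coprime p q"
  show "\<forall>c. poly p c \<noteq> 0 \<or> poly q c \<noteq> 0"
  proof (intro allI, rule ccontr)
    fix c assume "\<not> (poly p c \<noteq> 0 \<or> poly q c \<noteq> 0)"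
    hence "[:-c,1:] dvd p" "[:-c,1:] dvd q" by (auto simp: poly_eq_0_iff_dvd)
    hence "is_unit [:-c,1:]" using cp coprime_common_divisor by blast
    thus False by (simp add: is_unit_iff_degree)
  qed
next
  assume nr: "\<forall>c. poly p c \<noteq> 0 \<or> poly q c \<noteq> 0"
  show "coprime p q"
  proof (rule coprimeI)
    fix d assume dp: "d dvd p" and dq: "d dvd q"
    show "is_unit d"
    proof (rule ccontr)
      assume nu: "\<not> is_unit d"
      have "d \<noteq> 0" using dp dq nr by auto
      hence "degree d > 0" using nu is_unit_iff_degree by blast
      then obtain c where "poly d c = 0" using alg_closed_imp_poly_has_root by blast
      hence "poly p c = 0" "poly q c = 0" using dp dq by (auto elim!: dvdE)
      thus False using nr by blast
    qed
  qed
qed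

lemma poly_bezout:
  fixes a b :: "'a::field poly"
  assumes cp: "coprime a b"
  shows "\<exists>u v. u * a + v * b = 1"
proof -
  let ?Q = "\<lambda>n. \<exists>u v. u * a + v * b \<noteq> 0 \<and> degree (u * a + v * b) = n"
  have ab0: "a \<noteq> 0 \<or> b \<noteq> 0"
  proof (rule ccontr)
    assume "\<not> (a \<noteq> 0 \<or> b \<noteq> 0)"
    hence "is_unit (0 :: 'a poly)" using cp coprime_common_divisor[of a b 0] by auto
    thus False by simp
  qed
  have "\<exists>n. ?Q n"
  proof (cases "a \<noteq> 0")
    case True thus ?thesis by (intro exI[of _ "degree a"] exI[of _ 1] exI[of _ 0]) simp
  next
    case False thus ?thesis using ab0 by (intro exI[of _ "degree b"] exI[of _ 0] exI[of _ 1]) simp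
  qed
  then obtain n where Qn: "?Q n" and min: "\<And>m. m < n \<Longrightarrow> \<not> ?Q m"
    using exists_least_iff[of ?Q] by blast
  then obtain u v where uv: "u * a + v * b \<noteq> 0" "degree (u * a + v * b) = n" by blast
  define d where "d = u * a + v * b"
  have d0: "d \<noteq> 0" using uv d_def by simp
  have dv: "d dvd x" if x: "x = a \<or> x = b" for x
  proof (rule ccontr)
    assume nd: "\<not> d dvd x"
    hence xm: "x mod d \<noteq> 0" by (simp add: dvd_eq_mod_eq_0)
    have "degree (x mod d) < n" using degree_mod_less'[OF d0 xm] uv d_def by simp
    moreover have "x mod d = (if x = a then (1 - (x div d) * u) * a + (- ((x div d) * v)) * b
                              else (- ((x div d) * u)) * a + (1 - (x div d) * v) * b)"
    proof -
      have "x mod d = x - x div d * d" by (simp add: minus_div_mult_eq_mod)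
      thus ?thesis using x by (auto simp: d_def algebra_simps)
    qed
    ultimately have "?Q (degree (x mod d))" using xm by (metis (no_types, lifting))
    thus False using min \<open>degree (x mod d) < n\<close> by blast
  qed
  have "is_unit d" using cp dv coprime_common_divisor by blast
  then obtain c where c: "d = [:c:]" "c \<noteq> 0"
  proof (rule is_unit_polyE)
    fix c assume "d = [:c:]" "c dvd 1"
    thus thesis using that by fastforce
  qed
  have "smult (inverse c) u * a + smult (inverse c) v * b = smult (inverse c) d"
    by (simp add: d_def smult_add_right)
  also have "\<dots> = 1" using c by simp
  finally show ?thesis by blast
qed

lemma coprime_dvd_cancel_ac:
  fixes a :: "'a::field poly"
  assumes "coprime a b" "b dvd a * d" "b \<noteq> 0"
  shows "b dvd d"
proof -
  obtain u v where uv: "u * a + v * b = 1" using poly_bezout[OF assms(1)] by blast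
  have "d = u * (a * d) + v * b * d" using uv by (metis mult.assoc mult_1 distrib_right)
  moreover have "b dvd u * (a * d)" using assms(2) by simp
  moreover have "b dvd v * b * d" by simp
  ultimately show ?thesis by (metis dvd_add)
qed

lemma coprime_rep_unique:
  fixes a b c d :: "'a::field poly"
  assumes "b \<noteq> 0" "d \<noteq> 0" "coprime a b" "coprime c d" "Fract a b = Fract c d"
  shows "\<exists>u. u \<noteq> 0 \<and> c = smult u a \<and> d = smult u b"
proof -
  have eq: "a * d = c * b" using assms(5) eq_fract(1)[OF assms(1,2)] by simp
  have "b dvd d"
  proof -
    have "b dvd a * d" unfolding eq by simp
    thus ?thesis using assms coprime_dvd_cancel_ac by blast
  qed
  moreover have "d dvd b"
  proof -
    have "d dvd c * b" unfolding eq[symmetric] by simp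
    thus ?thesis using assms coprime_dvd_cancel_ac by blast
  qed
  ultimately obtain w w' where w: "d = b * w" "b = d * w'" unfolding dvd_def by blast
  have "b * (w * w') = (b * w) * w'" by (simp add: mult.assoc)
  also have "\<dots> = b" by (simp only: w(1)[symmetric] w(2)[symmetric])
  finally have "b * (w * w') = b * 1" by simp
  hence "w * w' = 1" using assms(1) mult_left_cancel by blast
  hence "is_unit w" unfolding dvd_def by (metis mult.commute)
  then obtain u where u: "w = [:u:]" "u \<noteq> 0"
  proof (rule is_unit_polyE)
    fix c assume "w = [:c:]" "c dvd 1"
    thus thesis using that by fastforce
  qed
  have "a * (b * w) = c * b" using eq by (simp only: w(1)[symmetric])
  hence "b * (a * w) = b * c" by (simp add: algebra_simps)
  hence "c = a * w" using assms(1) by simp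
  thus ?thesis using u w(1) by (auto simp: mult.commute)
qed

lemma rnum_rden_Fract:
  fixes a b :: "'a::field poly"
  assumes "b \<noteq> 0" "coprime a b"
  shows "\<exists>u. u \<noteq> 0 \<and> rnum (Fract a b) = smult u a \<and> rden (Fract a b) = smult u b"
proof -
  have r: "Fract a b = Fract (rnum (Fract a b)) (rden (Fract a b))" "lead_coeff (rden (Fract a b)) = 1"
    "coprime (rnum (Fract a b)) (rden (Fract a b))" using rnumden_ok by blast+
  have "rden (Fract a b) \<noteq> 0" using r(2) by auto
  thus ?thesis using coprime_rep_unique[OF assms(1) _ assms(2) r(3) r(1)] by blast
qed

lemma reduce_at_Fract:
  fixes a b :: "'a::field poly"
  assumes "b \<noteq> 0" "coprime a b"
  shows "reduce_at (Fract a b) c = (if poly b c = 0 then None else Some (poly a c / poly b c))"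
proof -
  obtain u where "u \<noteq> 0" "rnum (Fract a b) = smult u a" "rden (Fract a b) = smult u b"
    using rnum_rden_Fract[OF assms] by blast
  thus ?thesis unfolding reduce_at_def by simp
qed

lemma height_Fract:
  fixes a b :: "'a::field poly"
  assumes "b \<noteq> 0" "coprime a b"
  shows "height (Some (Fract a b)) = max (degree a) (degree b)"
proof -
  obtain u where "u \<noteq> 0" "rnum (Fract a b) = smult u a" "rden (Fract a b) = smult u b"
    using rnum_rden_Fract[OF assms] by blast
  thus ?thesis unfolding height_def by simp
qed


lemma f2_iter_Some: "(f2 c ^^ n) (Some z) = Some (((\<lambda>z. z^2 + c) ^^ n) z)"
  by (induction n) (simp_all add: f2_def)

lemma f2_iter_None: "(f2 c ^^ n) None = None"
  by (induction n) (simp_all add: f2_def)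

lemma portrait_fixed: "f y = y \<Longrightarrow> has_portrait f y 0 1"
  unfolding has_portrait_def is_periodic_def exact_period_def by auto

lemma funpow_comm_apply: "(f ^^ n) ((f ^^ k) x) = (f ^^ k) ((f ^^ n) x)"
  by (metis funpow_add add.commute comp_apply)

lemma portrait_suff:
  fixes c z w :: "'a::field_char_0"
  assumes M: "M \<ge> 1" and w: "w = ((\<lambda>z. z^2 + c) ^^ (M - 1)) z"
    and eq: "w^2 + w + c = 0" and nz: "\<not> (w = 0 \<and> c = 0)"
  shows "has_portrait (f2 c) (Some z) M 1"
proof -
  define F where "F = f2 c"
  have gw: "w^2 + c = -w" using eq by (simp add: algebra_simps add_eq_0_iff2)
  have gmw: "(-w)^2 + c = -w" using gw by simp
  have ne: "-w \<noteq> w"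
  proof
    assume "-w = w"
    hence "w = 0" by simp
    thus False using eq nz by simp
  qed
  have Fw: "F (Some w) = Some (-w)" using gw by (simp add: F_def f2_def)
  have Fmw: "F (Some (-w)) = Some (-w)" using gmw by (simp add: F_def f2_def)
  have iterw: "n \<ge> 1 \<Longrightarrow> (F ^^ n) (Some w) = Some (-w)" for n
  proof (induction n rule: dec_induct)
    case base thus ?case using Fw by simp
  next
    case (step n) thus ?case using Fmw by simp
  qed
  have FM1: "(F ^^ (M - 1)) (Some z) = Some w" using w by (simp add: F_def f2_iter_Some)
  have FM: "(F ^^ M) (Some z) = Some (-w)"
  proof -
    have "M = Suc (M - 1)" using M by simp
    hence "(F ^^ M) (Some z) = F ((F ^^ (M - 1)) (Some z))" by (metis funpow.simps(2) comp_apply)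
    thus ?thesis using FM1 Fw by simp
  qed
  have per: "is_periodic F ((F ^^ M) (Some z))"
    unfolding is_periodic_def FM using Fmw by (intro exI[of _ 1]) simp
  have ex: "exact_period F ((F ^^ M) (Some z)) 1"
    unfolding exact_period_def FM using Fmw by auto
  have np: "\<not> is_periodic F ((F ^^ m) (Some z))" if "m < M" for m
  proof
    assume "is_periodic F ((F ^^ m) (Some z))"
    then obtain n where n: "n > 0" "(F ^^ n) ((F ^^ m) (Some z)) = (F ^^ m) (Some z)"
      unfolding is_periodic_def by blast
    have "(F ^^ n) ((F ^^ (M - 1 - m)) ((F ^^ m) (Some z))) = (F ^^ (M - 1 - m)) ((F ^^ m) (Some z))"
      using n(2) funpow_comm_apply[where f=F and n=n and k="M - 1 - m" and x="(F ^^ m) (Some z)"] by simp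
    moreover have "(F ^^ (M - 1 - m)) ((F ^^ m) (Some z)) = (F ^^ (M - 1)) (Some z)"
    proof -
      have "M - 1 - m + m = M - 1" using that by simp
      thus ?thesis by (metis funpow_add comp_apply)
    qed
    ultimately have "(F ^^ n) (Some w) = Some w" using FM1 by simp
    moreover have "(F ^^ n) (Some w) = Some (-w)" using iterw n(1) by simp
    ultimately show False using ne by simp
  qed
  show ?thesis unfolding has_portrait_def using per ex np by (simp add: F_def)
qed

lemma portrait_nec:
  fixes c :: "'a::field"
  assumes "has_portrait (f2 c) y 1 1"
  shows "\<exists>z. y = Some z \<and> z^2 + z + c = 0 \<and> \<not> (z = 0 \<and> c = 0)"
proof -
  have np: "\<not> is_periodic (f2 c) y" using assms unfolding has_portrait_def by auto
  have ex: "f2 c (f2 c y) = f2 c y" using assms unfolding has_portrait_def exact_period_def by simp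
  have "(f2 c ^^ 1) y = f2 c y" by simp
  hence nf: "f2 c y \<noteq> y" using np unfolding is_periodic_def by (metis zero_less_one)
  then obtain z where yz: "y = Some z" by (cases y) (auto simp: f2_def)
  have e1: "(z^2 + c)^2 + c = z^2 + c" using ex yz by (simp add: f2_def)
  have e2: "z^2 + c \<noteq> z" using nf yz by (simp add: f2_def)
  have "(z^2 - z + c) * (z^2 + z + c) = 0"
  proof -
    have "(z^2 - z + c) * (z^2 + z + c) = ((z^2 + c)^2 + c) - (z^2 + c)"
      by (simp add: algebra_simps power2_eq_square)
    thus ?thesis using e1 by simp
  qed
  moreover have "z^2 - z + c \<noteq> 0" using e2 by (simp add: algebra_simps)
  ultimately have "z^2 + z + c = 0" by simp
  moreover have "\<not> (z = 0 \<and> c = 0)" using e2 by auto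
  ultimately show ?thesis using yz by blast
qed




definition N1 :: "'a::comm_ring_1 poly \<Rightarrow> 'a poly \<Rightarrow> 'a poly" where
  "N1 p q = p^2 + p * q + [:0,1:] * q^2"

lemma poly_N1: "poly (N1 p q) c = (poly p c)^2 + poly p c * poly q c + c * (poly q c)^2"
  by (simp add: N1_def)

lemma degree_Xsq:
  fixes q :: "'a::idom poly"
  assumes "q \<noteq> 0" shows "degree ([:0,1:] * q^2) = 2 * degree q + 1"
proof -
  have "degree ([:0,1:] * q^2) = degree ([:0,1:] :: 'a poly) + degree (q^2)"
    using assms by (intro degree_mult_eq) auto
  thus ?thesis by (simp add: degree_power_eq assms)
qed

lemma degree_sq_plus:
  fixes a b :: "'a::idom poly"
  assumes "b \<noteq> 0"
  shows "degree (a^2 + [:0,1:] * b^2) = max (2 * degree a) (2 * degree b + 1)"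
proof (cases "degree a \<le> degree b")
  case True
  have "degree (a^2) \<le> 2 * degree a" using degree_power_le[of a 2] by simp
  hence "degree (a^2) < degree ([:0,1:] * b^2)" using True degree_Xsq[OF assms] by simp
  hence "degree (a^2 + [:0,1:] * b^2) = degree ([:0,1:] * b^2)" by (rule degree_add_eq_right)
  thus ?thesis using True degree_Xsq[OF assms] by simp
next
  case False
  hence a0: "a \<noteq> 0" by auto
  have "degree ([:0,1:] * b^2) < degree (a^2)" using False degree_Xsq[OF assms] a0
    by (simp add: degree_power_eq)
  hence "degree (a^2 + [:0,1:] * b^2) = degree (a^2)" by (rule degree_add_eq_left)
  thus ?thesis using False a0 by (simp add: degree_power_eq)
qed

lemma degree_N1:
  fixes p q :: "'a::idom poly"
  assumes "q \<noteq> 0"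
  shows "degree (N1 p q) = max (2 * degree p) (2 * degree q + 1)"
proof (cases "degree p \<le> degree q")
  case True
  have "degree (p^2 + p * q) \<le> max (degree (p^2)) (degree (p * q))" by (rule degree_add_le_max)
  moreover have "degree (p^2) \<le> 2 * degree p" using degree_power_le[of p 2] by simp
  moreover have "degree (p * q) \<le> degree p + degree q" by (rule degree_mult_le)
  ultimately have "degree (p^2 + p * q) < degree ([:0,1:] * q^2)" using True degree_Xsq[OF assms] by simp
  hence "degree (p^2 + p * q + [:0,1:] * q^2) = degree ([:0,1:] * q^2)" by (rule degree_add_eq_right)
  thus ?thesis using True degree_Xsq[OF assms] by (simp add: N1_def)
next
  case False
  hence a0: "p \<noteq> 0" by auto
  have "degree (p * q + [:0,1:] * q^2) \<le> max (degree (p * q)) (degree ([:0,1:] * q^2))" by (rule degree_add_le_max)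
  moreover have "degree (p * q) \<le> degree p + degree q" by (rule degree_mult_le)
  ultimately have "degree (p * q + [:0,1:] * q^2) < degree (p^2)" using False degree_Xsq[OF assms] a0
    by (simp add: degree_power_eq)
  hence "degree (p^2 + (p * q + [:0,1:] * q^2)) = degree (p^2)" by (rule degree_add_eq_left)
  thus ?thesis using False a0 by (simp add: degree_power_eq N1_def add.assoc)
qed

lemma poly_roots_only_zero:
  fixes P :: "'a::alg_closed_field poly"
  assumes "P \<noteq> 0" "\<And>c. poly P c = 0 \<Longrightarrow> c = 0"
  shows "\<exists>k n. k \<noteq> 0 \<and> P = smult k ([:0,1:]^n)"
  using assms
proof (induction "degree P" arbitrary: P rule: less_induct)
  case less
  show ?case
  proof (cases "poly P 0 = 0")
    case True
    hence "[:0,1:] dvd P" using poly_eq_0_iff_dvd[of P 0] by simp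
    then obtain R where R: "P = [:0,1:] * R" by (elim dvdE)
    have R0: "R \<noteq> 0" using R less.prems(1) by auto
    have "degree ([:0,1:] * R) = degree ([:0,1:] :: 'a poly) + degree R" using R0 by (intro degree_mult_eq) auto
    hence "degree R < degree P" using R by simp
    moreover have "\<And>c. poly R c = 0 \<Longrightarrow> c = 0"
    proof -
      fix c assume "poly R c = 0"
      hence "poly P c = 0" using R by simp
      thus "c = 0" using less.prems(2) by blast
    qed
    ultimately obtain k n where kn: "k \<noteq> 0" "R = smult k ([:0,1:]^n)" using less.hyps[of R] R0 by blast
    have "P = smult k ([:0,1:]^Suc n)" using R kn(2) by (simp add: mult_smult_right)
    thus ?thesis using kn(1) by blast
  next
    case False
    have "degree P = 0"
    proof (rule ccontr)
      assume "degree P \<noteq> 0"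
      then obtain c where c: "poly P c = 0" using alg_closed_imp_poly_has_root by blast
      hence "c = 0" using less.prems(2) by blast
      thus False using c False by simp
    qed
    hence "P = [:coeff P 0:]" by (rule degree_0_id[symmetric])
    hence "P = smult (coeff P 0) ([:0,1:]^0)" by simp
    moreover have "coeff P 0 \<noteq> 0" using less.prems(1) \<open>P = [:coeff P 0:]\<close> by (metis pCons_0_0)
    ultimately show ?thesis by blast
  qed
qed

lemma poly_N1_div:
  fixes a b :: "'a::field poly"
  assumes "poly b c \<noteq> 0"
  shows "poly (N1 a b) c = (poly b c)^2 * ((poly a c / poly b c)^2 + poly a c / poly b c + c)"
  using assms by (simp add: poly_N1 field_simps power2_eq_square)

lemma poly_N1_div':
  fixes A B :: "'a::field"
  assumes "B \<noteq> 0"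
  shows "A^2 + A * B + c * B^2 = B^2 * ((A / B)^2 + A / B + c)"
  using assms by (simp add: field_simps power2_eq_square)

lemma realizes0:
  fixes \<alpha> :: "'a::alg_closed_field ratfun"
  shows "realizes \<alpha> 0 1"
proof -
  obtain a b where ab: "b \<noteq> 0" "\<alpha> = Fract a b" "coprime a b" using exists_coprime_rep by blast
  show ?thesis
  proof (cases "\<exists>c. poly b c = 0")
    case True
    then obtain c where "poly b c = 0" by blast
    hence "reduce_at \<alpha> c = None" using reduce_at_Fract[OF ab(1,3)] ab(2) by simp
    moreover have "f2 c None = None" by (simp add: f2_def)
    ultimately show ?thesis unfolding realizes_def using portrait_fixed by metis
  next
    case False
    have "degree b = 0"
    proof (rule ccontr)
      assume "degree b \<noteq> 0"
      hence "\<exists>c. poly b c = 0" using alg_closed_imp_poly_has_root by blast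
      thus False using False by blast
    qed
    hence bb: "b = [:coeff b 0:]" by (rule degree_0_id[symmetric])
    define b0 where "b0 = coeff b 0"
    have bb': "b = [:b0:]" using bb b0_def by simp
    have b00: "b0 \<noteq> 0" using ab(1) bb' by auto
    have pbc: "poly b c = b0" for c using bb' by simp
    define a' where "a' = smult (inverse b0) a"
    have "degree (N1 (- a') 1) = max (2 * degree (- a')) (2 * degree (1::'a poly) + 1)"
      by (rule degree_N1) simp
    hence "degree (N1 (- a') 1) > 0" by simp
    then obtain c where c: "poly (N1 (- a') 1) c = 0" using alg_closed_imp_poly_has_root by blast
    have pa: "poly a' c = poly a c / b0" by (simp add: a'_def field_simps)
    have red: "reduce_at \<alpha> c = Some (poly a c / b0)"
      using reduce_at_Fract[OF ab(1,3)] ab(2) pbc b00 by simp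
    have "(poly a' c)^2 + c = poly a' c" using c by (simp add: poly_N1 algebra_simps)
    hence "f2 c (reduce_at \<alpha> c) = reduce_at \<alpha> c" using red pa by (simp add: f2_def)
    thus ?thesis unfolding realizes_def using portrait_fixed by metis
  qed
qed

lemma realizes1_iff:
  fixes a b :: "'a::{alg_closed_field, field_char_0} poly"
  assumes ab: "b \<noteq> 0" "coprime a b"
  shows "realizes (Fract a b) 1 1 \<longleftrightarrow> (\<exists>c. poly (N1 a b) c = 0 \<and> \<not> (c = 0 \<and> poly a 0 = 0))"
proof
  assume "realizes (Fract a b) 1 1"
  then obtain c where "has_portrait (f2 c) (reduce_at (Fract a b) c) 1 1" unfolding realizes_def by blast
  then obtain z where z: "reduce_at (Fract a b) c = Some z" "z^2 + z + c = 0" "\<not> (z = 0 \<and> c = 0)"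
    using portrait_nec by blast
  have bc: "poly b c \<noteq> 0" and zz: "z = poly a c / poly b c"
    using z(1) reduce_at_Fract[OF ab] by (auto split: if_splits)
  have "poly (N1 a b) c = 0" using poly_N1_div[OF bc, of a] z(2) zz by simp
  moreover have "\<not> (c = 0 \<and> poly a 0 = 0)" using z(3) zz by auto
  ultimately show "\<exists>c. poly (N1 a b) c = 0 \<and> \<not> (c = 0 \<and> poly a 0 = 0)" by blast
next
  assume "\<exists>c. poly (N1 a b) c = 0 \<and> \<not> (c = 0 \<and> poly a 0 = 0)"
  then obtain c where c: "poly (N1 a b) c = 0" "\<not> (c = 0 \<and> poly a 0 = 0)" by blast
  have bc: "poly b c \<noteq> 0"
  proof
    assume "poly b c = 0"
    hence "poly a c \<noteq> 0" using ab(2) coprime_iff_no_common_root by blast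
    thus False using c(1) \<open>poly b c = 0\<close> by (simp add: poly_N1)
  qed
  define z where "z = poly a c / poly b c"
  have e: "z^2 + z + c = 0" using poly_N1_div[OF bc, of a] c(1) bc z_def by simp
  have nz: "\<not> (z = 0 \<and> c = 0)" using c(2) bc z_def by auto
  have "has_portrait (f2 c) (Some z) 1 1" using portrait_suff[of 1 z c z] e nz by simp
  moreover have "reduce_at (Fract a b) c = Some z" using reduce_at_Fract[OF ab] bc z_def by simp
  ultimately show "realizes (Fract a b) 1 1" unfolding realizes_def by metis
qed

primrec Pit :: "'a::comm_ring_1 poly \<Rightarrow> 'a poly \<Rightarrow> nat \<Rightarrow> 'a poly" where
  "Pit a b 0 = a"
| "Pit a b (Suc n) = (Pit a b n)^2 + [:0,1:] * (b^(2^n))^2"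

lemma Pit_eval:
  fixes a b :: "'a::field poly"
  assumes "poly b c \<noteq> 0"
  shows "((\<lambda>z. z^2 + c) ^^ n) (poly a c / poly b c) = poly (Pit a b n) c / (poly b c)^(2^n)"
proof (induction n)
  case 0 thus ?case by simp
next
  case (Suc n)
  have e: "(poly b c ^ 2 ^ n)^2 = poly b c ^ 2 ^ Suc n" by (simp add: power_mult[symmetric] mult.commute)
  have nz: "poly b c ^ 2 ^ n \<noteq> 0" using assms by simp
  have "((\<lambda>z. z^2 + c) ^^ Suc n) (poly a c / poly b c) = (poly (Pit a b n) c / (poly b c)^(2^n))^2 + c"
    using Suc by simp
  also have "\<dots> = ((poly (Pit a b n) c)^2 + c * (poly b c ^ 2 ^ n)^2) / (poly b c ^ 2 ^ n)^2"
    using nz by (simp add: field_simps power2_eq_square)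
  also have "\<dots> = poly (Pit a b (Suc n)) c / (poly b c)^(2^Suc n)"
    using e by simp
  finally show ?case .
qed

lemma Pit_root:
  fixes a b :: "'a::field poly"
  assumes "poly b c = 0"
  shows "poly (Pit a b n) c = (poly a c)^(2^n)"
  by (induction n) (simp_all add: assms power_mult[symmetric] mult.commute)

lemma realizesM:
  fixes \<alpha> :: "'a::{alg_closed_field, field_char_0} ratfun"
  assumes M: "M \<ge> 2"
  shows "realizes \<alpha> M 1"
proof -
  obtain a b where ab: "b \<noteq> 0" "\<alpha> = Fract a b" "coprime a b" using exists_coprime_rep by blast
  define m where "m = M - 2"
  define A0 where "A0 = Pit a b m"
  define B0 where "B0 = b^(2^m)"
  define A where "A = Pit a b (Suc m)"
  define B where "B = B0^2"
  have AA: "A = A0^2 + [:0,1:] * B0^2" by (simp add: A_def A0_def B0_def)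
  have B00: "B0 \<noteq> 0" using ab(1) by (simp add: B0_def)
  have B0': "B \<noteq> 0" using B00 by (simp add: B_def)
  have degA: "degree A \<ge> 1" using degree_sq_plus[OF B00, of A0] AA by simp
  have degN: "degree (N1 A B) \<ge> 2" using degree_N1[OF B0', of A] degA by simp
  have arootb: "poly b c = 0 \<Longrightarrow> poly a c \<noteq> 0" for c using ab(3) coprime_iff_no_common_root by blast
  obtain c where c: "poly (N1 A B) c = 0" "c \<noteq> 0 \<or> poly A0 0 \<noteq> 0"
  proof (cases "poly A0 0 = 0")
    case False
    obtain c where "poly (N1 A B) c = 0" using degN alg_closed_imp_poly_has_root[of "N1 A B"] by auto
    thus thesis using that False by blast
  next
    case True
    have b0: "poly b 0 \<noteq> 0"
    proof
      assume "poly b 0 = 0"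
      hence "poly A0 0 = (poly a 0)^(2^m)" unfolding A0_def by (rule Pit_root)
      thus False using True arootb \<open>poly b 0 = 0\<close> by simp
    qed
    have "[:0,1:] dvd A0" using True poly_eq_0_iff_dvd[of A0 0] by simp
    then obtain A1 where A1: "A0 = [:0,1:] * A1" by (elim dvdE)
    define A1' where "A1' = [:0,1:] * A1^2 + B0^2"
    have A': "A = [:0,1:] * A1'" unfolding AA A1 A1'_def by (simp add: algebra_simps power2_eq_square)
    define R where "R = [:0,1:] * A1'^2 + A1' * B + B^2"
    have NR: "N1 A B = [:0,1:] * R" unfolding N1_def A' R_def by (simp add: algebra_simps power2_eq_square)
    have pB0: "poly B0 0 \<noteq> 0" using b0 by (simp add: B0_def)
    have "poly R 0 = 2 * (poly B0 0)^4"
      by (simp add: R_def A1'_def B_def power2_eq_square algebra_simps numeral_eq_Suc)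
    hence R0: "poly R 0 \<noteq> 0" using pB0 by simp
    hence Rn: "R \<noteq> 0" by auto
    have "degree (N1 A B) = degree ([:0,1:] :: 'a poly) + degree R" unfolding NR using Rn by (intro degree_mult_eq) auto
    hence "degree R > 0" using degN by simp
    then obtain c where "poly R c = 0" using alg_closed_imp_poly_has_root by blast
    hence "poly (N1 A B) c = 0" "c \<noteq> 0" using NR R0 by auto
    thus thesis using that by blast
  qed
  have bc: "poly b c \<noteq> 0"
  proof
    assume bc0: "poly b c = 0"
    have "poly B c = 0" using bc0 by (simp add: B_def B0_def)
    moreover have "poly A c = (poly a c)^(2^Suc m)" unfolding A_def by (rule Pit_root[OF bc0])
    ultimately have "poly (N1 A B) c = ((poly a c)^(2^Suc m))^2" by (simp add: poly_N1)
    thus False using c(1) arootb[OF bc0] by simp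
  qed
  define z where "z = poly a c / poly b c"
  define w where "w = ((\<lambda>z. z^2 + c) ^^ (M - 1)) z"
  have PB: "poly B c = (poly b c)^(2^Suc m)" by (simp add: B_def B0_def power_mult[symmetric] mult.commute)
  have Mm: "M - 1 = Suc m" using M by (simp add: m_def)
  have ww: "w = poly A c / poly B c" unfolding w_def z_def Mm using Pit_eval[OF bc, of "Suc m" a] PB
    by (simp add: A_def)
  have pBc: "poly B c \<noteq> 0" using PB bc by simp
  have e: "w^2 + w + c = 0"
    using poly_N1_div[OF pBc, of A] c(1) ww pBc by simp
  have nz: "\<not> (w = 0 \<and> c = 0)"
  proof
    assume h: "w = 0 \<and> c = 0"
    hence "poly A0 0 \<noteq> 0" using c(2) by simp
    moreover have "poly A 0 = (poly A0 0)^2" by (simp add: AA)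
    ultimately have "poly A c \<noteq> 0" using h by simp
    moreover have "poly A c / poly B c = 0" using h ww by metis
    ultimately show False using pBc by simp
  qed
  have "has_portrait (f2 c) (Some z) M 1" using portrait_suff[of M w c z] M w_def e nz by simp
  moreover have "reduce_at \<alpha> c = Some z" using reduce_at_Fract[OF ab(1,3)] ab(2) bc z_def by simp
  ultimately show ?thesis unfolding realizes_def by metis
qed

definition sP :: "'a::comm_ring_1 poly \<Rightarrow> 'a poly \<Rightarrow> 'a poly" where
  "sP p q = - [:0,1:] * (p + q)"
definition sQ :: "'a::comm_ring_1 poly \<Rightarrow> 'a poly \<Rightarrow> 'a poly" where
  "sQ p q = p - ([:0,1:] - 1) * q"

lemma N1_step: "N1 (sP p q) (sQ p q) = [:0,1:]^2 * N1 p q"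
  by (simp add: N1_def sP_def sQ_def power2_eq_square algebra_simps)

lemma tvar_minus_1: "(tvar :: 'a::field ratfun) - 1 = Fract ([:0,1:] - 1) 1"
  by (simp add: tvar_def One_fract_def)

lemma phi1_step:
  fixes p q :: "'a::field poly"
  assumes "q \<noteq> 0" "sQ p q \<noteq> 0"
  shows "phi1 (Some (Fract p q)) = Some (Fract (sP p q) (sQ p q))"
proof -
  have ne: "Fract p q \<noteq> tvar - 1"
  proof
    assume "Fract p q = tvar - 1"
    hence "Fract p q = Fract ([:0,1:] - 1) 1" by (simp add: tvar_minus_1)
    hence "p * 1 = ([:0,1:] - 1) * q" using assms(1) eq_fract(1)[of q 1 p] by simp
    thus False using assms(2) by (simp add: sQ_def)
  qed
  have "- tvar * (Fract p q + 1) / (Fract p q - (tvar - 1)) = Fract (sP p q) (sQ p q)"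
  proof -
    have "- tvar * (Fract p q + 1) = Fract (- [:0,1:] * (p + q)) q"
      using assms(1) by (simp add: tvar_def One_fract_def)
    moreover have "Fract p q - (tvar - 1) = Fract (sQ p q) q"
      using assms(1) by (simp add: tvar_minus_1 sQ_def algebra_simps)
    ultimately have "- tvar * (Fract p q + 1) / (Fract p q - (tvar - 1)) = Fract (- [:0,1:] * (p + q) * q) (q * sQ p q)"
      by simp
    also have "\<dots> = Fract (sP p q) (sQ p q)"
      using assms by (simp add: eq_fract sP_def algebra_simps)
    finally show ?thesis .
  qed
  thus ?thesis using ne by (simp add: phi1_def)
qed

definition inv_pq :: "'a::field poly \<Rightarrow> 'a poly \<Rightarrow> nat \<Rightarrow> bool" where
  "inv_pq p q n \<longleftrightarrow> q \<noteq> 0 \<and> poly p 0 = 0 \<and> poly q 0 = 1 \<and> N1 p q = [:0,1:]^n"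

lemma dvd_Xpow_unit:
  fixes d :: "'a::field poly"
  assumes "d dvd [:0,1:]^n" "poly d 0 \<noteq> 0"
  shows "is_unit d"
  using assms(1)
proof (induction n)
  case 0 thus ?case by simp
next
  case (Suc n)
  then obtain e where e: "[:0,1:] * [:0,1:]^n = d * e" by (auto elim: dvdE)
  have "poly d 0 * poly e 0 = 0" using arg_cong[OF e, of "\<lambda>p. poly p 0"] by simp
  hence "poly e 0 = 0" using assms(2) by simp
  hence "[:0,1:] dvd e" using poly_eq_0_iff_dvd[of e 0] by simp
  then obtain e' where e': "e = [:0,1:] * e'" by (elim dvdE)
  have "[:0,1:] * [:0,1:]^n = [:0,1:] * (d * e')" using e e' by (simp add: algebra_simps)
  hence "[:0,1:]^n = d * e'" by (metis mult_left_cancel pCons_eq_0_iff one_neq_zero)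
  hence "d dvd [:0,1:]^n" by simp
  thus ?case by (rule Suc.IH)
qed

lemma inv_coprime:
  assumes "inv_pq p q n"
  shows "coprime p q"
proof (rule coprimeI)
  have a: "poly q 0 = 1" "N1 p q = [:0,1:]^n" using assms by (auto simp: inv_pq_def)
  fix d assume dp: "d dvd p" and dq: "d dvd q"
  have "d dvd p^2" using dp by (simp add: power2_eq_square dvd_mult2)
  moreover have "d dvd p * q" using dp by (simp add: dvd_mult2)
  moreover have "d dvd [:0,1:] * q^2"
  proof -
    have "d dvd q^2" using dq by (simp add: power2_eq_square dvd_mult2)
    thus ?thesis by (rule dvd_mult)
  qed
  ultimately have "d dvd N1 p q" unfolding N1_def by (intro dvd_add)
  hence "d dvd [:0,1:]^n" using a(2) by simp
  moreover have "poly d 0 \<noteq> 0"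
  proof
    assume "poly d 0 = 0"
    moreover obtain e where "q = d * e" using dq by (elim dvdE)
    ultimately have "poly q 0 = 0" by simp
    thus False using a(1) by simp
  qed
  ultimately show "is_unit d" by (rule dvd_Xpow_unit)
qed

lemma inv_step:
  assumes "inv_pq p q n"
  shows "inv_pq (sP p q) (sQ p q) (n + 2) \<and> sQ p q \<noteq> 0"
proof -
  have a: "q \<noteq> 0" "poly p 0 = 0" "poly q 0 = 1" "N1 p q = [:0,1:]^n"
    using assms by (auto simp: inv_pq_def)
  have q1: "poly (sQ p q) 0 = 1" using a by (simp add: sQ_def)
  hence q0: "sQ p q \<noteq> 0" by auto
  have "poly (sP p q) 0 = 0" by (simp add: sP_def)
  moreover have "N1 (sP p q) (sQ p q) = [:0,1:]^(n+2)" using a(4) N1_step[of p q] by (simp only: power_add mult.commute)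
  ultimately show ?thesis using q0 q1 by (simp add: inv_pq_def)
qed

primrec s0 :: "nat \<Rightarrow> 'a::comm_ring_1 poly \<times> 'a poly" where
  "s0 0 = (0, 1)"
| "s0 (Suc k) = (sP (fst (s0 k)) (snd (s0 k)), sQ (fst (s0 k)) (snd (s0 k)))"

primrec sI :: "nat \<Rightarrow> 'a::comm_ring_1 poly \<times> 'a poly" where
  "sI 0 = (- [:0,1:], 1)"
| "sI (Suc k) = (sP (fst (sI k)) (snd (sI k)), sQ (fst (sI k)) (snd (sI k)))"

lemma coprime_one_right: "coprime (p :: 'a::alg_closed_field poly) 1"
  unfolding coprime_iff_no_common_root by simp

lemma orb0:
  "inv_pq (fst (s0 k)) (snd (s0 k) :: 'a::field poly) (2 * k + 1) \<and>
   (phi1 ^^ k) (Some 0) = Some (Fract (fst (s0 k)) (snd (s0 k)) :: 'a ratfun)"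
proof (induction k)
  case 0
  have "inv_pq (0::'a poly) 1 1" by (simp add: inv_pq_def N1_def)
  moreover have "Fract 0 1 = (0 :: 'a ratfun)" by (simp add: Zero_fract_def)
  ultimately show ?case by simp
next
  case (Suc k)
  let ?p = "fst (s0 k) :: 'a poly" and ?q = "snd (s0 k) :: 'a poly"
  have IH1: "inv_pq ?p ?q (2 * k + 1)" using Suc.IH by blast
  have IH2: "(phi1 ^^ k) (Some 0) = Some (Fract ?p ?q)" using Suc.IH by blast
  have st: "inv_pq (sP ?p ?q) (sQ ?p ?q) (2 * k + 1 + 2)" "sQ ?p ?q \<noteq> 0"
    using inv_step[OF IH1] by blast+
  have "?q \<noteq> 0" using IH1 by (simp add: inv_pq_def)
  hence "(phi1 ^^ Suc k) (Some 0) = Some (Fract (sP ?p ?q) (sQ ?p ?q))"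
    using IH2 phi1_step[of ?q ?p] st(2) by simp
  moreover have "2 * k + 1 + 2 = 2 * Suc k + 1" by simp
  ultimately show ?case using st(1) by simp
qed

lemma orbI:
  "inv_pq (fst (sI k)) (snd (sI k) :: 'a::field poly) (2 * k + 2) \<and>
   (phi1 ^^ Suc k) None = Some (Fract (fst (sI k)) (snd (sI k)) :: 'a ratfun)"
proof (induction k)
  case 0
  show ?case by (simp add: inv_pq_def N1_def phi1_def tvar_def power2_eq_square)
next
  case (Suc k)
  let ?p = "fst (sI k) :: 'a poly" and ?q = "snd (sI k) :: 'a poly"
  have IH1: "inv_pq ?p ?q (2 * k + 2)" using Suc.IH by blast
  have IH2: "(phi1 ^^ Suc k) None = Some (Fract ?p ?q)" using Suc.IH by blast
  have st: "inv_pq (sP ?p ?q) (sQ ?p ?q) (2 * k + 2 + 2)" "sQ ?p ?q \<noteq> 0"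
    using inv_step[OF IH1] by blast+
  have "?q \<noteq> 0" using IH1 by (simp add: inv_pq_def)
  hence "(phi1 ^^ Suc (Suc k)) None = Some (Fract (sP ?p ?q) (sQ ?p ?q))"
    using IH2 phi1_step[of ?q ?p] st(2) by simp
  moreover have "2 * k + 2 + 2 = 2 * Suc k + 2" by simp
  ultimately show ?case using st(1) by simp
qed

lemma max_arith: "max (2 * x) (2 * y + 1) = (n::nat) \<Longrightarrow> max x y = n div 2"
  by (auto simp: max_def split: if_splits)

lemma height_inv:
  assumes "inv_pq p q n"
  shows "height (Some (Fract p q)) = n div 2"
proof -
  have a: "q \<noteq> 0" "coprime p q" "N1 p q = [:0,1:]^n" using assms inv_coprime[OF assms] by (auto simp: inv_pq_def)
  have "degree (N1 p q) = n" unfolding a(3) by (rule degree_linear_power)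
  hence "max (2 * degree p) (2 * degree q + 1) = n" using degree_N1[OF a(1), of p] by simp
  hence "max (degree p) (degree q) = n div 2" by (rule max_arith)
  thus ?thesis using height_Fract[OF a(1,2)] by simp
qed

lemma heights0:
  "height ((phi1 ^^ k) (Some (0 :: 'a::field ratfun))) = k"
proof -
  have o: "inv_pq (fst (s0 k)) (snd (s0 k) :: 'a poly) (2 * k + 1)"
    "(phi1 ^^ k) (Some 0) = Some (Fract (fst (s0 k)) (snd (s0 k)) :: 'a ratfun)" using orb0 by blast+
  have "(2 * k + 1) div 2 = k" by simp
  thus ?thesis using height_inv[OF o(1)] o(2) by simp
qed

lemma heightsI:
  "height ((phi1 ^^ k) (None :: 'a::field ratfun option)) = k"
proof (cases k)
  case 0 thus ?thesis by (simp add: height_def)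
next
  case (Suc j)
  have o: "inv_pq (fst (sI j)) (snd (sI j) :: 'a poly) (2 * j + 2)"
    "(phi1 ^^ Suc j) None = Some (Fract (fst (sI j)) (snd (sI j)) :: 'a ratfun)" using orbI by blast+
  have "(2 * j + 2) div 2 = Suc j" by simp
  thus ?thesis using height_inv[OF o(1)] o(2) Suc by simp
qed

lemma deg1_form:
  fixes p :: "'a::zero poly"
  assumes "degree p \<le> 1"
  shows "p = [:coeff p 0, coeff p 1:]"
proof (rule poly_eqI)
  fix n show "coeff p n = coeff [:coeff p 0, coeff p 1:] n"
  proof (cases n)
    case 0 thus ?thesis by simp
  next
    case (Suc m)
    show ?thesis
    proof (cases m)
      case 0 thus ?thesis using Suc by simp
    next
      case (Suc k)
      hence "n > degree p" using assms \<open>n = Suc m\<close> by simp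
      thus ?thesis using Suc \<open>n = Suc m\<close> by (simp add: coeff_eq_0)
    qed
  qed
qed

lemma classify:
  fixes p q :: "'a::{alg_closed_field, field_char_0} poly"
  assumes "coprime p q" "q \<noteq> 0" "poly p 0 = 0" "k \<noteq> 0" "N1 p q = smult k ([:0,1:]^n)"
  shows "\<exists>j. (phi1 ^^ j) (Some 0) = Some (Fract p q) \<or> (phi1 ^^ j) None = Some (Fract p q)"
  using assms
proof (induction n arbitrary: p q rule: less_induct)
  case (less n)
  have dN: "degree (N1 p q) = n" using less.prems(4,5) by (simp add: degree_linear_power)
  hence dd: "max (2 * degree p) (2 * degree q + 1) = n" using degree_N1[OF less.prems(2), of p] by simp
  have q0: "poly q 0 \<noteq> 0" using less.prems(1,3) coprime_iff_no_common_root by blast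
  consider "n = 0" | "n = 1" | "n = 2" | "n \<ge> 3" by linarith
  then show ?case
  proof cases
    case 1 thus ?thesis using dd by simp
  next
    case 2
    hence "degree p = 0" using dd by simp
    hence "p = [:coeff p 0:]" by (rule degree_0_id[symmetric])
    hence "p = 0" using less.prems(3) by (metis poly_0_coeff_0 pCons_0_0)
    hence "Fract p q = 0" using less.prems(2) by (simp add: Zero_fract_def eq_fract)
    hence "(phi1 ^^ 0) (Some 0) = Some (Fract p q)" by simp
    thus ?thesis by blast
  next
    case 3
    hence dp: "degree p \<le> 1" and dq: "degree q = 0" using dd by (auto simp: max_def split: if_splits)
    define p1 where "p1 = coeff p 1"
    define q0' where "q0' = coeff q 0"
    have pp: "p = [:0, p1:]" using deg1_form[OF dp] less.prems(3) p1_def by (simp add: poly_0_coeff_0)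
    have qq: "q = [:q0':]" using degree_0_id[OF dq] q0'_def by simp
    have q00: "q0' \<noteq> 0" using less.prems(2) qq by auto
    have ev: "poly (N1 p q) c = k * c^2" for c using less.prems(5) 3 by simp
    have e1: "p1^2 + p1 * q0' + q0'^2 = k" using ev[of 1] pp qq by (simp add: poly_N1)
    have e2: "p1^2 - p1 * q0' - q0'^2 = k" using ev[of "-1"] pp qq by (simp add: poly_N1)
    have "2 * (q0' * (p1 + q0')) = 0" using e1 e2 by (simp add: algebra_simps power2_eq_square)
    hence "p1 = - q0'" using q00 by (simp add: eq_neg_iff_add_eq_0)
    hence "Fract p q = Fract (- [:0,1:]) 1" using pp qq q00 by (simp add: eq_fract)
    moreover have "phi1 None = Some (Fract (- [:0,1:]) 1 :: 'a ratfun)" by (simp add: phi1_def tvar_def)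
    ultimately have "(phi1 ^^ 1) None = Some (Fract p q)" by simp
    thus ?thesis by blast
  next
    case 4
    define X :: "'a poly" where "X = [:0,1:]"
    have X0: "X \<noteq> 0" by (simp add: X_def)
    have "X dvd p" using less.prems(3) poly_eq_0_iff_dvd[of p 0] by (simp add: X_def)
    then obtain P1 where P1: "p = X * P1" by (elim dvdE)
    have Xn: "[:0,1:]^n = X * X^(n-1)" using 4 by (simp add: X_def power_Suc[symmetric])
    have "X * (X * P1^2 + P1 * q + q^2) = X * smult k (X^(n-1))"
      using less.prems(5) unfolding Xn N1_def P1 X_def by (simp add: algebra_simps power2_eq_square)
    hence r1: "X * P1^2 + P1 * q + q^2 = smult k (X^(n-1))" using X0 mult_left_cancel by blast
    have "poly (X * P1^2 + P1 * q + q^2) 0 = 0" unfolding r1 using 4 by (simp add: X_def)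
    hence "poly P1 0 * poly q 0 + (poly q 0)^2 = 0" by (simp add: X_def)
    hence "poly q 0 * (poly P1 0 + poly q 0) = 0" by (simp add: algebra_simps power2_eq_square)
    hence "poly (P1 + q) 0 = 0" using q0 by simp
    hence "X dvd P1 + q" using poly_eq_0_iff_dvd[of "P1 + q" 0] by (simp add: X_def)
    then obtain E where E: "P1 + q = X * E" by (elim dvdE)
    have Xn1: "X^(n-1) = X * X^(n-2)" using 4 by (simp add: power_Suc[symmetric] Suc_diff_Suc numeral_2_eq_2)
    have "X * (P1^2 + q * E) = X * smult k (X^(n-2))"
    proof -
      have "X * (P1^2 + q * E) = X * P1^2 + q * (P1 + q)" by (simp add: E algebra_simps)
      also have "\<dots> = smult k (X^(n-1))" using r1 by (simp add: algebra_simps power2_eq_square)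
      finally show ?thesis using Xn1 by simp
    qed
    hence r2: "P1^2 + q * E = smult k (X^(n-2))" using X0 mult_left_cancel by blast
    have "poly (P1^2 + q * E) 0 = 0" unfolding r2 using 4 by (simp add: X_def)
    hence "(poly P1 0)^2 + poly q 0 * poly E 0 = 0" by simp
    moreover have "poly P1 0 = - poly q 0" using \<open>poly (P1 + q) 0 = 0\<close> by (simp add: eq_neg_iff_add_eq_0)
    ultimately have "poly q 0 * (poly q 0 + poly E 0) = 0" by (simp add: algebra_simps power2_eq_square)
    hence E0: "poly E 0 = - poly q 0" using q0 by (simp add: eq_neg_iff_add_eq_0 add.commute)
    define p' where "p' = E - P1"
    define q' where "q' = - E"
    have sp: "sP p' q' = p" by (simp add: sP_def p'_def q'_def P1 X_def)
    have sq: "sQ p' q' = q"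
    proof -
      have "sQ p' q' = X * E - P1" by (simp add: sQ_def p'_def q'_def X_def algebra_simps)
      also have "\<dots> = (P1 + q) - P1" by (simp only: E)
      finally show ?thesis by simp
    qed
    have p'0: "poly p' 0 = 0" using E0 \<open>poly P1 0 = - poly q 0\<close> by (simp add: p'_def)
    have q'0: "q' \<noteq> 0" using E0 q0 by (auto simp: q'_def)
    have cp: "coprime p' q'"
      unfolding coprime_iff_no_common_root
    proof (intro allI, rule ccontr)
      fix c assume "\<not> (poly p' c \<noteq> 0 \<or> poly q' c \<noteq> 0)"
      hence "poly (sP p' q') c = 0" "poly (sQ p' q') c = 0" by (auto simp: sP_def sQ_def)
      thus False using sp sq less.prems(1) coprime_iff_no_common_root by metis
    qed
    have "X^2 * N1 p' q' = X^2 * smult k (X^(n-2))"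
    proof -
      have "X^2 * N1 p' q' = N1 p q" using N1_step[of p' q'] sp sq by (simp add: X_def)
      also have "\<dots> = smult k (X^n)" using less.prems(5) by (simp add: X_def)
      also have "X^n = X^2 * X^(n-2)"
      proof -
        have "n = 2 + (n - 2)" using 4 by simp
        hence "X^n = X^(2 + (n-2))" by (metis)
        thus ?thesis by (simp only: power_add)
      qed
      finally show ?thesis by simp
    qed
    moreover have "X^2 \<noteq> 0" using X0 by simp
    ultimately have "N1 p' q' = smult k (X^(n-2))" using mult_left_cancel by blast
    hence "N1 p' q' = smult k ([:0,1:]^(n-2))" by (simp add: X_def)
    moreover have "n - 2 < n" using 4 by simp
    ultimately obtain j where j: "(phi1 ^^ j) (Some 0) = Some (Fract p' q') \<or> (phi1 ^^ j) None = Some (Fract p' q')"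
      using less.IH[of "n - 2" p' q'] cp q'0 p'0 less.prems(4) by blast
    have "phi1 (Some (Fract p' q')) = Some (Fract p q)"
      using phi1_step[OF q'0] sp sq less.prems(2) by simp
    hence "(phi1 ^^ Suc j) (Some 0) = Some (Fract p q) \<or> (phi1 ^^ Suc j) None = Some (Fract p q)"
      using j by auto
    thus ?thesis by blast
  qed
qed

lemma inv_fail:
  fixes p q :: "'a::{alg_closed_field, field_char_0} poly"
  assumes "inv_pq p q n"
  shows "\<not> realizes (Fract p q) 1 1"
proof
  have a: "q \<noteq> 0" "coprime p q" "poly p 0 = 0" "N1 p q = [:0,1:]^n"
    using assms inv_coprime[OF assms] by (auto simp: inv_pq_def)
  assume "realizes (Fract p q) 1 1"
  then obtain c where c: "poly (N1 p q) c = 0" "\<not> (c = 0 \<and> poly p 0 = 0)" using realizes1_iff[OF a(1,2)] by blast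
  have "c ^ n = 0" using c(1) a(4) by (simp add: poly_power)
  hence "c = 0" by simp
  thus False using c(2) a(3) by simp
qed

lemma fail_iff:
  fixes \<alpha> :: "'a::{alg_closed_field, field_char_0} ratfun"
  shows "\<not> realizes \<alpha> 1 1 \<longleftrightarrow> Some \<alpha> \<in> orbit phi1 (Some 0) \<union> orbit phi1 None"
proof
  obtain a b where ab: "b \<noteq> 0" "\<alpha> = Fract a b" "coprime a b" using exists_coprime_rep by blast
  assume nr: "\<not> realizes \<alpha> 1 1"
  hence allr: "\<And>c. poly (N1 a b) c = 0 \<Longrightarrow> c = 0 \<and> poly a 0 = 0"
    using realizes1_iff[OF ab(1,3)] ab(2) by blast
  have dN: "degree (N1 a b) \<ge> 1" using degree_N1[OF ab(1), of a] by simp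
  hence N0: "N1 a b \<noteq> 0" by auto
  obtain c where "poly (N1 a b) c = 0" using dN alg_closed_imp_poly_has_root[of "N1 a b"] by auto
  hence a0: "poly a 0 = 0" using allr by blast
  obtain k n where kn: "k \<noteq> 0" "N1 a b = smult k ([:0,1:]^n)"
    using poly_roots_only_zero[OF N0] allr by blast
  obtain j where "(phi1 ^^ j) (Some 0) = Some (Fract a b) \<or> (phi1 ^^ j) None = Some (Fract a b)"
    using classify[OF ab(3) ab(1) a0 kn] by blast
  thus "Some \<alpha> \<in> orbit phi1 (Some 0) \<union> orbit phi1 None"
  proof
    assume "(phi1 ^^ j) (Some 0) = Some (Fract a b)"
    thus ?thesis unfolding orbit_def ab(2) by (intro UnI1 CollectI exI[of _ j]) simp
  next
    assume "(phi1 ^^ j) None = Some (Fract a b)"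
    thus ?thesis unfolding orbit_def ab(2) by (intro UnI2 CollectI exI[of _ j]) simp
  qed
next
  assume h: "Some \<alpha> \<in> orbit phi1 (Some 0) \<union> orbit phi1 None"
  have "\<exists>j. (phi1 ^^ j) (Some 0) = Some \<alpha> \<or> (phi1 ^^ j) None = Some \<alpha>"
  proof (cases "Some \<alpha> \<in> orbit phi1 (Some 0)")
    case True
    hence "\<exists>k. Some \<alpha> = (phi1 ^^ k) (Some 0)" unfolding orbit_def by simp
    then obtain k where k: "Some \<alpha> = (phi1 ^^ k) (Some 0)" by (rule exE)
    show ?thesis by (rule exI[of _ k], rule disjI1, rule k[symmetric])
  next
    case False
    hence "Some \<alpha> \<in> orbit phi1 None" using h by simp
    hence "\<exists>k. Some \<alpha> = (phi1 ^^ k) None" unfolding orbit_def by simp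
    then obtain k where k: "Some \<alpha> = (phi1 ^^ k) None" by (rule exE)
    show ?thesis by (rule exI[of _ k], rule disjI2, rule k[symmetric])
  qed
  then obtain j where j: "(phi1 ^^ j) (Some 0) = Some \<alpha> \<or> (phi1 ^^ j) None = Some \<alpha>" by (rule exE)
  thus "\<not> realizes \<alpha> 1 1"
  proof
    assume h: "(phi1 ^^ j) (Some 0) = Some \<alpha>"
    have o: "inv_pq (fst (s0 j)) (snd (s0 j) :: 'a poly) (2 * j + 1)"
      "(phi1 ^^ j) (Some 0) = Some (Fract (fst (s0 j)) (snd (s0 j)) :: 'a ratfun)" using orb0 by blast+
    have "\<alpha> = Fract (fst (s0 j)) (snd (s0 j))" using h o(2) by simp
    thus ?thesis using inv_fail[OF o(1)] by simp
  next
    assume h: "(phi1 ^^ j) None = Some \<alpha>"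
    then obtain i where i: "j = Suc i" by (cases j) auto
    have o: "inv_pq (fst (sI i)) (snd (sI i) :: 'a poly) (2 * i + 2)"
      "(phi1 ^^ Suc i) None = Some (Fract (fst (sI i)) (snd (sI i)) :: 'a ratfun)" using orbI by blast+
    have "\<alpha> = Fract (fst (sI i)) (snd (sI i))" using h o(2) i by simp
    thus ?thesis using inv_fail[OF o(1)] by simp
  qed
qed

theorem proposition5p18:
  fixes \<alpha> :: "'a::{alg_closed_field, field_char_0} ratfun" and M :: nat
  shows "(\<not> realizes \<alpha> M 1 \<longleftrightarrow>
            M = 1 \<and> Some \<alpha> \<in> orbit phi1 (Some 0) \<union> orbit phi1 None) \<and>
         (\<forall>k. height ((phi1 ^^ k) (Some 0)) = k \<and> height ((phi1 ^^ k) None) = k)"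
proof
  show "\<not> realizes \<alpha> M 1 \<longleftrightarrow> M = 1 \<and> Some \<alpha> \<in> orbit phi1 (Some 0) \<union> orbit phi1 None"
  proof (cases "M = 0")
    case True thus ?thesis using realizes0[of \<alpha>] by simp
  next
    case False
    show ?thesis
    proof (cases "M = 1")
      case True thus ?thesis using fail_iff[of \<alpha>] by simp
    next
      case False
      hence "M \<ge> 2" using \<open>M \<noteq> 0\<close> by simp
      thus ?thesis using realizesM[of M \<alpha>] False by simp
    qed
  qed
next
  show "\<forall>k. height ((phi1 ^^ k) (Some 0)) = k \<and> height ((phi1 ^^ k) None) = k"
    using heights0 heightsI by blast
qed

end
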